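(* $\mathcal{H}^3=\left\{a+b\mathbf{j}\in\mathbb{D} : |a|+|b|\leq \frac{2}{3\sqrt{3}}\right\}$. In particular $\mathcal{H}^3$ is a square centered at the origin with side length $\frac{2\sqrt{2}}{3\sqrt{3}}$.
   Context: The hyperbolic numbers are $\mathbb{D}=\{a+b\mathbf{j} : a,b\in\mathbb{R}\}$ with $\mathbf{j}^2=1$, $\mathbf{j}\notin\mathbb{R}$, a commutative real algebra identified with $\mathbb{R}^2$ via $a+b\mathbf{j}\leftrightarrow(a,b)$, with the Euclidean norm. For $c\in\mathbb{D}$, $Q_{3,c}(z)=z^3+c$ on $\mathbb{D}$, $Q_{3,c}^m$ its $m$-fold iterate, and $\mathcal{H}^3=\{c\in\mathbb{D} : (Q_{3,c}^m(0))_{m\geq1}\text{ is bounded}\}$. *)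

theory Defs
  imports "HOL-Analysis.Analysis"
begin

text \<open>Hyperbolic numbers D = {a + b j : j^2 = 1}, identified with real \<times> real via
  a + b j <-> (a, b), with the Euclidean norm of the product type.\<close>

type_synonym hyperbolic = "real \<times> real"

definition hmult :: "hyperbolic \<Rightarrow> hyperbolic \<Rightarrow> hyperbolic" where
  "hmult z w = (fst z * fst w + snd z * snd w, fst z * snd w + snd z * fst w)"

definition hcube :: "hyperbolic \<Rightarrow> hyperbolic" where
  "hcube z = hmult z (hmult z z)"

definition Q3 :: "hyperbolic \<Rightarrow> hyperbolic \<Rightarrow> hyperbolic" where
  "Q3 c z = hcube z + c"

definition H3 :: "hyperbolic set" where
  "H3 = {c. bounded (range (\<lambda>m::nat. ((Q3 c) ^^ (Suc m)) 0))}"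

end

theory Submission
  imports Defs
begin

primrec orb :: "real \<Rightarrow> nat \<Rightarrow> real" where
  "orb t 0 = 0"
| "orb t (Suc n) = (orb t n)^3 + t"

lemma s3: "sqrt 3 * sqrt 3 = (3::real)" by simp

lemma orb_neg: "orb (-t) n = - orb t n"
  by (induction n) (auto simp: power3_eq_cube)

lemma orb_bdd:
  assumes "\<bar>t\<bar> \<le> 2 / (3 * sqrt 3)"
  shows "\<bar>orb t n\<bar> \<le> 1 / sqrt 3"
proof (induction n)
  case 0 then show ?case by simp
next
  case (Suc n)
  have "\<bar>orb t n\<bar>^3 \<le> (1/sqrt 3)^3"
    by (rule power_mono[OF Suc]) simp
  also have "(1/sqrt 3)^3 = 1/(3* sqrt 3)"
    by (simp add: power3_eq_cube s3 mult.assoc[symmetric])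
  finally have h: "\<bar>orb t n\<bar>^3 \<le> 1/(3* sqrt 3)" .
  have "\<bar>orb t (Suc n)\<bar> \<le> \<bar>orb t n\<bar>^3 + \<bar>t\<bar>"
    by (simp add: abs_triangle_ineq[THEN order_trans] power_abs[symmetric])
  also have "\<dots> \<le> 1/(3* sqrt 3) + 2/(3* sqrt 3)" using h assms by linarith
  also have "\<dots> = 1 / sqrt 3" by (simp add: field_simps)
  finally show ?case .
qed

lemma cubic_ge:
  assumes "x \<ge> 0"
  shows "x^3 - x + 2 / (3 * sqrt 3) \<ge> 0"
proof -
  define s where "s = 1 / sqrt 3"
  have ss: "3 * s^2 = 1" by (simp add: s_def power2_eq_square)
  have s3': "2 * s^3 = 2 / (3 * sqrt 3)"
    by (simp add: s_def power3_eq_cube s3 mult.assoc[symmetric])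
  have "x^3 - x + 2 / (3 * sqrt 3) = (x - s)^2 * (x + 2 * s)"
    using ss s3' by (simp add: algebra_simps power2_eq_square power3_eq_cube) 
  also have "\<dots> \<ge> 0" using assms by (simp add: s_def)
  finally show ?thesis .
qed

lemma orb_grow:
  assumes "t > 2 / (3 * sqrt 3)"
  shows "orb t n \<ge> real n * (t - 2 / (3 * sqrt 3))"
proof (induction n)
  case 0 then show ?case by simp
next
  case (Suc n)
  have "orb t n \<ge> 0" using Suc assms by (smt (verit) mult_nonneg_nonneg of_nat_0_le_iff)
  from cubic_ge[OF this] Suc have "orb t n ^ 3 + t \<ge> real n * (t - 2 / (3 * sqrt 3)) + (t - 2 / (3 * sqrt 3))" by linarith
  then show ?case by (simp add: distrib_right)
qed

lemma orb_char: "(\<exists>B. \<forall>m. \<bar>orb t (Suc m)\<bar> \<le> B) \<longleftrightarrow> \<bar>t\<bar> \<le> 2 / (3 * sqrt 3)"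
proof
  assume "\<bar>t\<bar> \<le> 2 / (3 * sqrt 3)"
  then show "\<exists>B. \<forall>m. \<bar>orb t (Suc m)\<bar> \<le> B" using orb_bdd by blast
next
  assume "\<exists>B. \<forall>m. \<bar>orb t (Suc m)\<bar> \<le> B"
  then obtain B where B: "\<And>m. \<bar>orb t (Suc m)\<bar> \<le> B" by blast
  show "\<bar>t\<bar> \<le> 2 / (3 * sqrt 3)"
  proof (rule ccontr)
    assume neg: "\<not> ?thesis"
    obtain t' where t': "t' > 2 / (3 * sqrt 3)" "t' = t \<or> t' = -t" using neg by (intro that[of "\<bar>t\<bar>"]) auto
    have B': "\<bar>orb t' (Suc m)\<bar> \<le> B" for m using B[of m] t'(2) orb_neg[of t "Suc m"] by auto
    obtain n where n: "B < real n * (t' - 2 / (3 * sqrt 3))"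
      using reals_Archimedean3[of "t' - 2 / (3 * sqrt 3)"] t'(1) by auto
    have "real n * (t' - 2 / (3 * sqrt 3)) \<le> real (Suc n) * (t' - 2 / (3 * sqrt 3))"
      using t'(1) by (intro mult_right_mono) auto
    also have "\<dots> \<le> orb t' (Suc n)" by (rule orb_grow[OF t'(1)])
    also have "\<dots> \<le> B" using B'[of n] by simp
    finally show False using n by simp
  qed
qed

lemma hcube_sum: "fst (hcube z) + snd (hcube z) = (fst z + snd z)^3"
  by (simp add: hcube_def hmult_def power3_eq_cube algebra_simps)

lemma hcube_diff: "fst (hcube z) - snd (hcube z) = (fst z - snd z)^3"
  by (simp add: hcube_def hmult_def power3_eq_cube algebra_simps)

lemma iter_orb:
  "fst ((Q3 c ^^ m) 0) + snd ((Q3 c ^^ m) 0) = orb (fst c + snd c) m \<and>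
   fst ((Q3 c ^^ m) 0) - snd ((Q3 c ^^ m) 0) = orb (fst c - snd c) m"
proof (induction m)
  case 0 then show ?case by simp
next
  case (Suc m)
  define z where "z = (Q3 c ^^ m) 0"
  have e: "(Q3 c ^^ Suc m) 0 = hcube z + c" by (simp add: z_def Q3_def)
  have "fst (hcube z + c) + snd (hcube z + c) = (fst z + snd z)^3 + (fst c + snd c)"
    using hcube_sum[of z] by simp
  moreover have "fst (hcube z + c) - snd (hcube z + c) = (fst z - snd z)^3 + (fst c - snd c)"
    using hcube_diff[of z] by simp
  ultimately show ?case using Suc[folded z_def] unfolding e by simp
qed

lemma H3_char: "c \<in> H3 \<longleftrightarrow> \<bar>fst c + snd c\<bar> \<le> 2 / (3 * sqrt 3) \<and> \<bar>fst c - snd c\<bar> \<le> 2 / (3 * sqrt 3)"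
proof -
  let ?z = "\<lambda>m. (Q3 c ^^ Suc m) 0"
  have n1: "\<bar>fst z\<bar> + \<bar>snd z\<bar> \<le> 2 * norm z" for z :: hyperbolic
    using norm_fst_le[of "fst z" "snd z"] norm_snd_le[of "snd z" "fst z"] by simp
  have n2: "norm z \<le> \<bar>fst z + snd z\<bar> + \<bar>fst z - snd z\<bar>" for z :: hyperbolic
    using norm_Pair_le[of "fst z" "snd z"] by simp
  have "c \<in> H3 \<longleftrightarrow> (\<exists>B. \<forall>m. norm (?z m) \<le> B)"
    unfolding H3_def bounded_iff by auto
  also have "\<dots> \<longleftrightarrow> (\<exists>B. \<forall>m. \<bar>orb (fst c + snd c) (Suc m)\<bar> \<le> B) \<and>
                   (\<exists>B. \<forall>m. \<bar>orb (fst c - snd c) (Suc m)\<bar> \<le> B)"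
  proof
    assume "\<exists>B. \<forall>m. norm (?z m) \<le> B"
    then obtain B where B: "\<And>m. norm (?z m) \<le> B" by blast
    have "\<bar>orb (fst c + snd c) (Suc m)\<bar> \<le> 2*B \<and> \<bar>orb (fst c - snd c) (Suc m)\<bar> \<le> 2*B" for m
      using iter_orb[where c=c and m="Suc m"] n1[of "?z m"] B[of m] by (smt (verit))
    then show "(\<exists>B. \<forall>m. \<bar>orb (fst c + snd c) (Suc m)\<bar> \<le> B) \<and>
                   (\<exists>B. \<forall>m. \<bar>orb (fst c - snd c) (Suc m)\<bar> \<le> B)" by blast
  next
    assume "(\<exists>B. \<forall>m. \<bar>orb (fst c + snd c) (Suc m)\<bar> \<le> B) \<and>
                   (\<exists>B. \<forall>m. \<bar>orb (fst c - snd c) (Suc m)\<bar> \<le> B)"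
    then obtain B1 B2 where B: "\<And>m. \<bar>orb (fst c + snd c) (Suc m)\<bar> \<le> B1"
      "\<And>m. \<bar>orb (fst c - snd c) (Suc m)\<bar> \<le> B2" by blast
    have "norm (?z m) \<le> B1 + B2" for m
      using iter_orb[where c=c and m="Suc m"] n2[of "?z m"] B(1)[of m] B(2)[of m] by (smt (verit))
    then show "\<exists>B. \<forall>m. norm (?z m) \<le> B" by blast
  qed
  also have "\<dots> \<longleftrightarrow> \<bar>fst c + snd c\<bar> \<le> 2 / (3 * sqrt 3) \<and> \<bar>fst c - snd c\<bar> \<le> 2 / (3 * sqrt 3)"
    by (simp only: orb_char)
  finally show ?thesis .
qed

lemma H3_eq: "H3 = {(a, b). \<bar>a\<bar> + \<bar>b\<bar> \<le> 2 / (3 * sqrt 3)}"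
proof -
  have "\<bar>a + b\<bar> \<le> r \<and> \<bar>a - b\<bar> \<le> r \<longleftrightarrow> \<bar>a\<bar> + \<bar>b\<bar> \<le> r" for a b r :: real
    by arith
  then show ?thesis using H3_char by auto
qed

lemma hull4:
  fixes r :: real
  assumes r: "r > 0"
  shows "convex hull {(r, 0), (0, r), (-r, 0), (0, -r)} = {(a, b). \<bar>a\<bar> + \<bar>b\<bar> \<le> r}"
proof
  have cvx: "convex {(a, b). \<bar>a\<bar> + \<bar>b\<bar> \<le> r}"
    unfolding convex_def
  proof (clarsimp)
    fix a b a' b' u v :: real
    assume h: "\<bar>a\<bar> + \<bar>b\<bar> \<le> r" "\<bar>a'\<bar> + \<bar>b'\<bar> \<le> r" "0 \<le> u" "0 \<le> v" "u + v = 1"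
    have "\<bar>u * a + v * a'\<bar> + \<bar>u * b + v * b'\<bar> \<le> u * (\<bar>a\<bar> + \<bar>b\<bar>) + v * (\<bar>a'\<bar> + \<bar>b'\<bar>)"
      using h(3,4) abs_triangle_ineq[of "u * a" "v * a'"] abs_triangle_ineq[of "u * b" "v * b'"]
      by (simp add: abs_mult algebra_simps)
    also have "\<dots> \<le> u * r + v * r" using h by (intro add_mono mult_left_mono) auto
    finally show "\<bar>u * a + v * a'\<bar> + \<bar>u * b + v * b'\<bar> \<le> r" using h(5) by (metis distrib_right mult_1)
  qed
  show "convex hull {(r, 0), (0, r), (-r, 0), (0, -r)} \<subseteq> {(a, b). \<bar>a\<bar> + \<bar>b\<bar> \<le> r}"
    by (rule hull_minimal) (use r cvx in auto)
next
  show "{(a, b). \<bar>a\<bar> + \<bar>b\<bar> \<le> r} \<subseteq> convex hull {(r, 0), (0, r), (-r, 0), (0, -r)}"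
  proof (clarsimp simp only: convex_hull_finite[OF finite.insertI[OF finite.insertI[OF finite.insertI[OF finite.insertI[OF finite.emptyI]]]]])
    fix a b :: real
    assume h: "\<bar>a\<bar> + \<bar>b\<bar> \<le> r"
    define w where "w = (1 - (\<bar>a\<bar> + \<bar>b\<bar>) / r) / 4"
    have w0: "w \<ge> 0" using h r by (simp add: w_def field_simps)
    define u where "u p = (if p = (r,0) then max a 0 / r + w else if p = (0,r) then max b 0 / r + w
       else if p = (-r,0) then max (-a) 0 / r + w else max (-b) 0 / r + w)" for p :: hyperbolic
    have ne: "(r,0) \<noteq> (0,r)" "(r,0) \<noteq> (-r,0)" "(r,0) \<noteq> (0::real,-r)" "(0,r) \<noteq> (-r,0::real)"
      "(0,r) \<noteq> (0::real,-r)" "(-r,0) \<noteq> (0::real,-r)" using r by auto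
    show "\<exists>u. (\<forall>x\<in>{(r, 0), (0, r), (- r, 0), (0, - r)}. 0 \<le> u x) \<and>
             sum u {(r, 0), (0, r), (- r, 0), (0, - r)} = 1 \<and>
             (\<Sum>x\<in>{(r, 0), (0, r), (- r, 0), (0, - r)}. u x *\<^sub>R x) = (a, b)"
    proof (intro exI[of _ u] conjI)
      show "\<forall>x\<in>{(r, 0), (0, r), (- r, 0), (0, - r)}. 0 \<le> u x"
        using w0 r by (auto simp: u_def)
      show "sum u {(r, 0), (0, r), (- r, 0), (0, - r)} = 1"
        using ne r by (simp add: u_def w_def field_simps max_def abs_if split: if_splits)
      show "(\<Sum>x\<in>{(r, 0), (0, r), (- r, 0), (0, - r)}. u x *\<^sub>R x) = (a, b)"
        using ne r by (simp add: u_def w_def field_simps max_def abs_if split: if_splits)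
    qed
  qed
qed

theorem mainTheorem10:
  shows "H3 = {(a, b). \<bar>a\<bar> + \<bar>b\<bar> \<le> 2 / (3 * sqrt 3)}
     \<and> H3 = convex hull {(2 / (3 * sqrt 3), 0), (0, 2 / (3 * sqrt 3)),
                          (- 2 / (3 * sqrt 3), 0), (0, - 2 / (3 * sqrt 3))}
     \<and> dist ((2 / (3 * sqrt 3), 0) :: hyperbolic) (0, 2 / (3 * sqrt 3))
         = 2 * sqrt 2 / (3 * sqrt 3)"
proof (intro conjI)
  show "H3 = {(a, b). \<bar>a\<bar> + \<bar>b\<bar> \<le> 2 / (3 * sqrt 3)}" by (rule H3_eq)
  have r: "2 / (3 * sqrt 3) > (0::real)" by simp
  show "H3 = convex hull {(2 / (3 * sqrt 3), 0), (0, 2 / (3 * sqrt 3)),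
                          (- 2 / (3 * sqrt 3), 0), (0, - 2 / (3 * sqrt 3))}"
    using hull4[OF r] H3_eq by simp
  show "dist ((2 / (3 * sqrt 3), 0) :: hyperbolic) (0, 2 / (3 * sqrt 3))
         = 2 * sqrt 2 / (3 * sqrt 3)"
    by (simp add: dist_Pair_Pair dist_real_def real_sqrt_mult power2_eq_square[symmetric] real_sqrt_abs)
qed

end
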